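(* Let $\mathbf{A}$, $\mathbf{B}$, $\mathbf{C}$ be the commutative integral residuated chains described in the context, with $\mathbf{A}$ a subalgebra of both $\mathbf{B}$ and $\mathbf{C}$. There is no totally ordered residuated lattice $\mathbf{D}$ (not necessarily commutative nor integral) together with residuated-lattice embeddings $h\colon \mathbf{B}\to\mathbf{D}$ and $k\colon \mathbf{C}\to\mathbf{D}$ such that $h(a)=k(a)$ for all $a\in A$. In other words, the V-formation $(\mathbf{A},\mathbf{B},\mathbf{C},\iota_B,\iota_C)$, where $\iota_B,\iota_C$ are the inclusion maps, has no amalgam in the class of totally ordered residuated lattices.
   Context: A residuated lattice is an algebra $(L,\wedge,\vee,\cdot,\backslash,/,1)$ where $(L,\wedge,\vee)$ is a lattice, $(L,\cdot,1)$ is a monoid, and $xy\le z \iff y\le x\backslash z \iff x\le z/y$. It is integral if $1$ is the top element; commutative if $\cdot$ is commutative, in which case $x\backslash y=y/x$ is written $x\to y$; a chain if totally ordered. In a chain, $x\to y=\max\{z: xz\le y\}$, and in an integral chain $x\to y=1$ whenever $x\le y$. The algebras (all commutative, integral, totally ordered, with $1$ the multiplicative identity and top): - $\mathbf{A}$: universe $u<v<1$, $xy=\min(x,y)$, and $x\to y=1$ if $x\le y$, $x\to y=y$ otherwise. - $\mathbf{B}$: universe $u<b<v<1$, with $v\cdot v=v$, $v\cdot b=b$, $v\cdot u=u$, $b\cdot b=u$, $b\cdot u=u$, $u\cdot u=u$; residuals: $x\to y=1$ if $x\le y$, and $v\to b=b$, $v\to u=u$, $b\to u=b$. - $\mathbf{C}$: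 universe $u<d<c<v<1$, with $v\cdot v=v$, $v\cdot c=d$, $v\cdot d=d$, $v\cdot u=u$, $c\cdot c=c\cdot d=d\cdot d=u$, and $x\cdot u=u$ for all $x$; residuals: $x\to y=1$ if $x\le y$, and $v\to c=c$, $v\to d=c$, $v\to u=u$, $c\to d=v$, $c\to u=c$, $d\to u=c$. The set $\{u,v,1\}$ is the universe of a subalgebra of both $\mathbf{B}$ and $\mathbf{C}$, equal to $\mathbf{A}$. An embedding is an injective homomorphism in the signature $\{\wedge,\vee,\cdot,\backslash,/,1\}$. *)

theory Defs
  imports Main
begin

record 'a rl =
  rle   :: "'a \<Rightarrow> 'a \<Rightarrow> bool"
  rmeet :: "'a \<Rightarrow> 'a \<Rightarrow> 'a"
  rjoin :: "'a \<Rightarrow> 'a \<Rightarrow> 'a"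
  rmult :: "'a \<Rightarrow> 'a \<Rightarrow> 'a"
  rldiv :: "'a \<Rightarrow> 'a \<Rightarrow> 'a"   (* x \ y *)
  rrdiv :: "'a \<Rightarrow> 'a \<Rightarrow> 'a"   (* x / y *)
  rone  :: "'a"

definition residuated_lattice :: "'a rl \<Rightarrow> bool" where
  "residuated_lattice R \<longleftrightarrow>
     (\<forall>x. rle R x x) \<and>
     (\<forall>x y. rle R x y \<and> rle R y x \<longrightarrow> x = y) \<and>
     (\<forall>x y z. rle R x y \<and> rle R y z \<longrightarrow> rle R x z) \<and>
     (\<forall>x y z. rle R z (rmeet R x y) \<longleftrightarrow> rle R z x \<and> rle R z y) \<and>
     (\<forall>x y z. rle R (rjoin R x y) z \<longleftrightarrow> rle R x z \<and> rle R y z) \<and>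
     (\<forall>x y z. rmult R (rmult R x y) z = rmult R x (rmult R y z)) \<and>
     (\<forall>x. rmult R (rone R) x = x \<and> rmult R x (rone R) = x) \<and>
     (\<forall>x y z. (rle R (rmult R x y) z \<longleftrightarrow> rle R y (rldiv R x z)) \<and>
              (rle R (rmult R x y) z \<longleftrightarrow> rle R x (rrdiv R z y)))"

definition residuated_chain :: "'a rl \<Rightarrow> bool" where
  "residuated_chain R \<longleftrightarrow> residuated_lattice R \<and> (\<forall>x y. rle R x y \<or> rle R y x)"

definition rl_embedding :: "'a rl \<Rightarrow> 'b rl \<Rightarrow> ('a \<Rightarrow> 'b) \<Rightarrow> bool" where
  "rl_embedding R S h \<longleftrightarrow> inj h \<and>
     (\<forall>x y. h (rmeet R x y) = rmeet S (h x) (h y)) \<and>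
     (\<forall>x y. h (rjoin R x y) = rjoin S (h x) (h y)) \<and>
     (\<forall>x y. h (rmult R x y) = rmult S (h x) (h y)) \<and>
     (\<forall>x y. h (rldiv R x y) = rldiv S (h x) (h y)) \<and>
     (\<forall>x y. h (rrdiv R x y) = rrdiv S (h x) (h y)) \<and>
     h (rone R) = rone S"

datatype elA = Au | Av | A1

fun rankA :: "elA \<Rightarrow> nat" where
  "rankA Au = 0" | "rankA Av = 1" | "rankA A1 = 2"

definition leA :: "elA \<Rightarrow> elA \<Rightarrow> bool" where "leA x y \<longleftrightarrow> rankA x \<le> rankA y"
definition minA :: "elA \<Rightarrow> elA \<Rightarrow> elA" where "minA x y = (if leA x y then x else y)"
definition maxA :: "elA \<Rightarrow> elA \<Rightarrow> elA" where "maxA x y = (if leA x y then y else x)"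
definition impA :: "elA \<Rightarrow> elA \<Rightarrow> elA" where "impA x y = (if leA x y then A1 else y)"

definition algA :: "elA rl" where
  "algA = \<lparr> rle = leA, rmeet = minA, rjoin = maxA, rmult = minA,
            rldiv = (\<lambda>x y. impA x y), rrdiv = (\<lambda>y x. impA x y), rone = A1 \<rparr>"

datatype elB = Bu | Bb | Bv | B1

fun rankB :: "elB \<Rightarrow> nat" where
  "rankB Bu = 0" | "rankB Bb = 1" | "rankB Bv = 2" | "rankB B1 = 3"

definition leB :: "elB \<Rightarrow> elB \<Rightarrow> bool" where "leB x y \<longleftrightarrow> rankB x \<le> rankB y"
definition minB :: "elB \<Rightarrow> elB \<Rightarrow> elB" where "minB x y = (if leB x y then x else y)"
definition maxB :: "elB \<Rightarrow> elB \<Rightarrow> elB" where "maxB x y = (if leB x y then y else x)"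

fun multB :: "elB \<Rightarrow> elB \<Rightarrow> elB" where
  "multB B1 y = y"
| "multB x B1 = x"
| "multB Bv Bv = Bv"
| "multB Bv Bb = Bb"
| "multB Bb Bv = Bb"
| "multB _ _ = Bu"

fun impB :: "elB \<Rightarrow> elB \<Rightarrow> elB" where
  "impB x y = (if leB x y then B1 else
     (case (x, y) of
        (B1, _) \<Rightarrow> y
      | (Bv, Bb) \<Rightarrow> Bb
      | (Bv, Bu) \<Rightarrow> Bu
      | (Bb, Bu) \<Rightarrow> Bb
      | _ \<Rightarrow> B1))"

definition algB :: "elB rl" where
  "algB = \<lparr> rle = leB, rmeet = minB, rjoin = maxB, rmult = multB,
            rldiv = (\<lambda>x y. impB x y), rrdiv = (\<lambda>y x. impB x y), rone = B1 \<rparr>"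

datatype elC = Cu | Cd | Cc | Cv | C1

fun rankC :: "elC \<Rightarrow> nat" where
  "rankC Cu = 0" | "rankC Cd = 1" | "rankC Cc = 2" | "rankC Cv = 3" | "rankC C1 = 4"

definition leC :: "elC \<Rightarrow> elC \<Rightarrow> bool" where "leC x y \<longleftrightarrow> rankC x \<le> rankC y"
definition minC :: "elC \<Rightarrow> elC \<Rightarrow> elC" where "minC x y = (if leC x y then x else y)"
definition maxC :: "elC \<Rightarrow> elC \<Rightarrow> elC" where "maxC x y = (if leC x y then y else x)"

fun multC :: "elC \<Rightarrow> elC \<Rightarrow> elC" where
  "multC C1 y = y"
| "multC x C1 = x"
| "multC Cv Cv = Cv"
| "multC Cv Cc = Cd"
| "multC Cc Cv = Cd"
| "multC Cv Cd = Cd"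
| "multC Cd Cv = Cd"
| "multC _ _ = Cu"

fun impC :: "elC \<Rightarrow> elC \<Rightarrow> elC" where
  "impC x y = (if leC x y then C1 else
     (case (x, y) of
        (C1, _) \<Rightarrow> y
      | (Cv, Cc) \<Rightarrow> Cc
      | (Cv, Cd) \<Rightarrow> Cc
      | (Cv, Cu) \<Rightarrow> Cu
      | (Cc, Cd) \<Rightarrow> Cv
      | (Cc, Cu) \<Rightarrow> Cc
      | (Cd, Cu) \<Rightarrow> Cc
      | _ \<Rightarrow> C1))"

definition algC :: "elC rl" where
  "algC = \<lparr> rle = leC, rmeet = minC, rjoin = maxC, rmult = multC,
            rldiv = (\<lambda>x y. impC x y), rrdiv = (\<lambda>y x. impC x y), rone = C1 \<rparr>"

fun iotaB :: "elA \<Rightarrow> elB" where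
  "iotaB Au = Bu" | "iotaB Av = Bv" | "iotaB A1 = B1"

fun iotaC :: "elA \<Rightarrow> elC" where
  "iotaC Au = Cu" | "iotaC Av = Cv" | "iotaC A1 = C1"

end

theory Submission
  imports Defs
begin

lemma rl_parts:
  assumes L: "residuated_lattice D"
  shows "rle D x x"
    and "rle D x y \<Longrightarrow> rle D y x \<Longrightarrow> x = y"
    and "rle D x y \<Longrightarrow> rle D y z \<Longrightarrow> rle D x z"
    and "rle D z (rmeet D x y) \<longleftrightarrow> rle D z x \<and> rle D z y"
    and "rle D (rmult D x y) z \<longleftrightarrow> rle D y (rldiv D x z)"
    and "rle D (rmult D x y) z \<longleftrightarrow> rle D x (rrdiv D z y)"
proof -
  note Ls = L[unfolded residuated_lattice_def]
  have reflA: "\<forall>x. rle D x x" using Ls by (rule conjunct1)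
  have antiA: "\<forall>x y. rle D x y \<and> rle D y x \<longrightarrow> x = y" using Ls[THEN conjunct2] by (rule conjunct1)
  have transA: "\<forall>x y z. rle D x y \<and> rle D y z \<longrightarrow> rle D x z" using Ls[THEN conjunct2, THEN conjunct2] by (rule conjunct1)
  have meetA: "\<forall>x y z. rle D z (rmeet D x y) \<longleftrightarrow> rle D z x \<and> rle D z y" using Ls[THEN conjunct2, THEN conjunct2, THEN conjunct2] by (rule conjunct1)
  have resA: "\<forall>x y z. (rle D (rmult D x y) z \<longleftrightarrow> rle D y (rldiv D x z)) \<and>
              (rle D (rmult D x y) z \<longleftrightarrow> rle D x (rrdiv D z y))"
    using Ls[THEN conjunct2, THEN conjunct2, THEN conjunct2, THEN conjunct2, THEN conjunct2, THEN conjunct2, THEN conjunct2] .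
  show "rle D x x" using reflA by (rule spec)
  show "rle D x y \<Longrightarrow> rle D y x \<Longrightarrow> x = y" using antiA[rule_format, of x y] by blast
  show "rle D x y \<Longrightarrow> rle D y z \<Longrightarrow> rle D x z" using transA[rule_format, of x y z] by blast
  show "rle D z (rmeet D x y) \<longleftrightarrow> rle D z x \<and> rle D z y" using meetA[rule_format, of z x y] .
  show "rle D (rmult D x y) z \<longleftrightarrow> rle D y (rldiv D x z)" using resA[rule_format, THEN conjunct1] .
  show "rle D (rmult D x y) z \<longleftrightarrow> rle D x (rrdiv D z y)" using resA[rule_format, THEN conjunct2] .
qed

lemma emb_le:
  assumes L: "residuated_lattice D" and e: "rmeet D (h x) (h y) = h x"
  shows "rle D (h x) (h y)"
proof -
  have "rle D (h x) (h x)" using L by (rule rl_parts(1))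
  hence "rle D (h x) (rmeet D (h x) (h y))" using e by simp
  thus ?thesis using rl_parts(4)[OF L] by blast
qed

theorem mainTheorem1:
  "\<not> (\<exists>(D :: 'd rl) h k.
        residuated_chain D \<and>
        rl_embedding algB D h \<and> rl_embedding algC D k \<and>
        (\<forall>a. h (iotaB a) = k (iotaC a)))"
proof
  assume "\<exists>(D :: 'd rl) h k.
        residuated_chain D \<and>
        rl_embedding algB D h \<and> rl_embedding algC D k \<and>
        (\<forall>a. h (iotaB a) = k (iotaC a))"
  then obtain D :: "'d rl" and h k where ch: "residuated_chain D"
    and eh: "rl_embedding algB D h" and ek: "rl_embedding algC D k"
    and ag: "\<forall>a. h (iotaB a) = k (iotaC a)" by blast
  have L: "residuated_lattice D" using ch unfolding residuated_chain_def by (rule conjunct1)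
  have totA: "\<forall>x y. rle D x y \<or> rle D y x" using ch unfolding residuated_chain_def by (rule conjunct2)
  have tot: "\<And>x y. rle D x y \<or> rle D y x" using totA by blast
  note P = rl_parts[OF L]
  have refl: "\<And>x. rle D x x" by (rule P(1))
  have anti: "\<And>x y. rle D x y \<Longrightarrow> rle D y x \<Longrightarrow> x = y" by (rule P(2))
  have trans: "\<And>x y z. rle D x y \<Longrightarrow> rle D y z \<Longrightarrow> rle D x z" by (rule P(3))
  have resl: "\<And>x y z. rle D (rmult D x y) z \<longleftrightarrow> rle D y (rldiv D x z)" by (rule P(5))
  have resr: "\<And>x y z. rle D (rmult D x y) z \<longleftrightarrow> rle D x (rrdiv D z y)" by (rule P(6))
  have mono: "\<And>x x' y z. rle D x x' \<Longrightarrow> rle D (rmult D x' y) z \<Longrightarrow> rle D (rmult D x y) z"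
  proof -
    fix x x' y z assume a: "rle D x x'" and b: "rle D (rmult D x' y) z"
    have "rle D x' (rrdiv D z y)" using b resr by simp
    hence "rle D x (rrdiv D z y)" using trans[OF a] by simp
    thus "rle D (rmult D x y) z" using resr by simp
  qed
  define u where "u = h Bu"
  define b where "b = h Bb"
  define v where "v = h Bv"
  define c where "c = k Cc"
  define d where "d = k Cd"
  have u2: "k Cu = u" using ag[rule_format, of Au] by (simp add: u_def)
  have v2: "k Cv = v" using ag[rule_format, of Av] by (simp add: v_def)
  have hm: "\<And>x y. h (multB x y) = rmult D (h x) (h y)" and hd: "\<And>x y. h (impB x y) = rldiv D (h x) (h y)"
    and hinj: "inj h"
    using eh unfolding rl_embedding_def algB_def by (simp_all del: impB.simps)
  have km: "\<And>x y. k (multC x y) = rmult D (k x) (k y)" and kd: "\<And>x y. k (impC x y) = rldiv D (k x) (k y)"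
    and kmeet: "\<And>x y. k (minC x y) = rmeet D (k x) (k y)" and kinj: "inj k"
    using ek unfolding rl_embedding_def algC_def by (simp_all del: impC.simps)
  have vb: "rmult D v b = b" using hm[of Bv Bb] by (simp add: v_def b_def)
  have bb: "rmult D b b = u" using hm[of Bb Bb] by (simp add: u_def b_def)
  have bu: "rldiv D b u = b" using hd[of Bb Bu] by (simp add: u_def b_def leB_def)
  have vc: "rmult D v c = d" using km[of Cv Cc] v2 by (simp add: c_def d_def)
  have dc: "rmult D d c = u" using km[of Cd Cc] u2 by (simp add: c_def d_def)
  have du: "rldiv D d u = c" using kd[of Cd Cu] u2 by (simp add: c_def d_def leC_def)
  have dlec: "rle D d c" using emb_le[OF L, of k Cd Cc] kmeet[of Cd Cc] by (simp add: c_def d_def minC_def leC_def)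
  have dnc: "d \<noteq> c" unfolding c_def d_def by (simp add: inj_eq[OF kinj])
  show False
  proof (cases "rle D b c")
    case True
    have "rle D (rmult D v c) d" using vc refl by simp
    hence "rle D c (rldiv D v d)" using resl by simp
    hence "rle D b (rldiv D v d)" using True trans by blast
    hence "rle D (rmult D v b) d" using resl by simp
    hence bd: "rle D b d" using vb by simp
    have "rle D (rmult D b c) u" using mono[OF bd] dc refl by simp
    hence "rle D c b" using resl[of b c u] bu by simp
    hence "rle D c d" using bd trans by blast
    thus False using dlec anti dnc by blast
  next
    case False
    hence cb: "rle D c b" using tot by blast
    have "rle D (rmult D d b) u" using mono[OF trans[OF dlec cb]] bb refl by simp
    hence "rle D b c" using resl[of d b u] du by simp
    hence "b = c" using cb anti by blast
    hence "d = c" using vb vc by simp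
    thus False using dnc by blast
  qed
qed

end
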